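(* Let $\phi$ be a reduced Boolean formula in the input variables $x_1,\dots,x_n$ and let $Q \subseteq [0,1]^n$ be a polytope such that $\phi(Q) \neq \emptyset$. Then $\phi(Q)$ is a polytope with extension complexity $\operatorname{xc}(\phi(Q)) \le |\phi| \operatorname{xc}(Q)$.
   Context: Boolean formulas are built from input variables $x_1,\dots,x_n$ using $\wedge$, $\vee$, $\neg$. A formula is reduced if negations are applied only to input variables. The size $|\phi|$ of a formula is the total number of occurrences of input variables in it. For a reduced formula $\phi$ and a convex set $Q \subseteq [0,1]^n$, the set $\phi(Q)$ is defined recursively: a non-negated variable $x_i$ is replaced by $\{x \in Q : x_i = 1\}$; a negated variable $\neg x_i$ by $\{x \in Q : x_i = 0\}$; a conjunction of two subformulas by the intersection of the corresponding sets; a disjunction by the convex hull of the union of the corresponding sets. An extended formulation of size $m$ of a polytope $P \subseteq \mathbb{R}^n$ consists of $T \in \mathbb{R}^{n\times d}$, $A \in \mathbb{R}^{m \times d}$, $t \in \mathbb{R}^n$, $b \in \mathbb{R}^m$ with $P = \{x : \exists y \in \mathbb{R}^d,\ Ay \ge b,\ x = Ty+t\}$; the extension complexity $\operatorname{xc}(P)$ is the smallest size of an extended formulation of $P$. *)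

theory Defs
  imports "HOL-Analysis.Analysis"
begin

text \<open>Reduced Boolean formulas over input variables indexed by the finite type 'n
  (negation only on variables).\<close>
datatype 'i rformula =
    PosVar 'i
  | NegVar 'i
  | Conj "'i rformula" "'i rformula"
  | Disj "'i rformula" "'i rformula"

fun fsize :: "'i rformula \<Rightarrow> nat" where
  "fsize (PosVar i) = 1"
| "fsize (NegVar i) = 1"
| "fsize (Conj a b) = fsize a + fsize b"
| "fsize (Disj a b) = fsize a + fsize b"

fun fapply :: "'n rformula \<Rightarrow> (real ^ 'n) set \<Rightarrow> (real ^ 'n) set" where
  "fapply (PosVar i) Q = {x \<in> Q. x $ i = 1}"
| "fapply (NegVar i) Q = {x \<in> Q. x $ i = 0}"
| "fapply (Conj a b) Q = fapply a Q \<inter> fapply b Q"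
| "fapply (Disj a b) Q = convex hull (fapply a Q \<union> fapply b Q)"

text \<open>Vectors in R^d are functions on
  {..<d} (values outside are irrelevant).\<close>
definition has_ext_formulation :: "(real ^ 'n) set \<Rightarrow> nat \<Rightarrow> bool" where
  "has_ext_formulation P m \<longleftrightarrow>
     (\<exists>(d::nat) (T :: 'n \<Rightarrow> nat \<Rightarrow> real) (A :: nat \<Rightarrow> nat \<Rightarrow> real)
        (t :: real ^ 'n) (b :: nat \<Rightarrow> real).
        P = {x. \<exists>y :: nat \<Rightarrow> real.
                 (\<forall>i<m. (\<Sum>j<d. A i j * y j) \<ge> b i) \<and>
                 x = (\<chi> k. (\<Sum>j<d. T k j * y j) + t $ k)})"

definition xc :: "(real ^ 'n) set \<Rightarrow> nat" where
  "xc P = (LEAST m. has_ext_formulation P m)"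

end

theory Submission imports Defs begin

definition affd :: "nat \<Rightarrow> ((nat \<Rightarrow> real) \<Rightarrow> real) \<Rightarrow> bool" where
  "affd d f \<longleftrightarrow> (\<exists>a c. \<forall>y. f y = (\<Sum>j<d. a j * y j) + c)"

lemma affd_local:
  assumes "affd d f" "\<And>j. j < d \<Longrightarrow> y j = y' j"
  shows "f y = f y'"
proof -
  from assms(1) obtain a c where f: "\<And>y. f y = (\<Sum>j<d. a j * y j) + c" unfolding affd_def by blast
  show ?thesis unfolding f using assms(2) by (auto intro!: sum.cong)
qed

lemma affd_comb:
  assumes "affd d f"
  shows "f (\<lambda>j. \<alpha> * u j + \<beta> * v j) = \<alpha> * f u + \<beta> * f v + (1 - \<alpha> - \<beta>) * f (\<lambda>j. 0)"
proof -
  from assms(1) obtain a c where f: "\<And>y. f y = (\<Sum>j<d. a j * y j) + c" unfolding affd_def by blast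
  have "(\<Sum>j<d. a j * (\<alpha> * u j + \<beta> * v j)) = \<alpha> * (\<Sum>j<d. a j * u j) + \<beta> * (\<Sum>j<d. a j * v j)"
    by (simp add: sum_distrib_left sum.distrib algebra_simps)
  then show ?thesis unfolding f by (simp add: algebra_simps)
qed

lemma affd_const: "affd d (\<lambda>y. c)"
  unfolding affd_def by (rule exI[of _ "\<lambda>j. 0"]) auto

lemma affd_coord: assumes "j < d" shows "affd d (\<lambda>y. y j)"
proof -
  have "(\<Sum>i<d. (if i = j then 1 else 0) * y i) = y j" for y :: "nat \<Rightarrow> real"
  proof -
    have "(\<Sum>i<d. (if i = j then 1 else 0) * y i) = (\<Sum>i<d. if i = j then y i else 0)"
      by (rule sum.cong) auto
    then show ?thesis using assms by simp
  qed
  then show ?thesis unfolding affd_def by (metis add_0_right)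
qed

lemma affd_add: "affd d f \<Longrightarrow> affd d g \<Longrightarrow> affd d (\<lambda>y. f y + g y)"
  unfolding affd_def
proof (elim exE)
  fix a c a' c'
  assume f: "\<forall>y. f y = (\<Sum>j<d. a j * y j) + c" and g: "\<forall>y. g y = (\<Sum>j<d. a' j * y j) + c'"
  show "\<exists>a c. \<forall>y. f y + g y = (\<Sum>j<d. a j * y j) + c"
    by (rule exI[of _ "\<lambda>j. a j + a' j"], rule exI[of _ "c + c'"]) (simp add: f g algebra_simps sum.distrib)
qed

lemma affd_cmult: "affd d f \<Longrightarrow> affd d (\<lambda>y. r * f y)"
  unfolding affd_def
proof (elim exE)
  fix a c
  assume f: "\<forall>y. f y = (\<Sum>j<d. a j * y j) + c"
  show "\<exists>a c. \<forall>y. r * f y = (\<Sum>j<d. a j * y j) + c"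
    by (rule exI[of _ "\<lambda>j. r * a j"], rule exI[of _ "r * c"]) (simp add: f algebra_simps sum_distrib_left)
qed

lemma affd_diff: "affd d f \<Longrightarrow> affd d g \<Longrightarrow> affd d (\<lambda>y. f y - g y)"
  using affd_add[of d f "\<lambda>y. (-1) * g y"] affd_cmult[of d g "-1"] by simp

lemma affd_mono: assumes "affd d f" "d \<le> d'" shows "affd d' f"
proof -
  from assms(1) obtain a c where f: "\<And>y. f y = (\<Sum>j<d. a j * y j) + c" unfolding affd_def by blast
  have "(\<Sum>j<d'. (if j < d then a j else 0) * y j) = (\<Sum>j<d. a j * y j)" for y
  proof -
    have "(\<Sum>j<d'. (if j < d then a j else 0) * y j) = (\<Sum>j<d'. if j < d then a j * y j else 0)"
      by (rule sum.cong) auto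
    also have "\<dots> = (\<Sum>j\<in>{..<d'} \<inter> {j. j < d}. a j * y j)"
      by (simp add: sum.If_cases)
    also have "{..<d'} \<inter> {j. j < d} = {..<d}" using assms(2) by auto
    finally show ?thesis .
  qed
  then show ?thesis unfolding affd_def
    by (intro exI[of _ "\<lambda>j. if j < d then a j else 0"] exI[of _ c]) (simp add: f)
qed

lemma affd_shift: assumes "affd d f" shows "affd (e + d) (\<lambda>y. f (\<lambda>j. y (j + e)))"
proof -
  from assms(1) obtain a c where f: "\<And>y. f y = (\<Sum>j<d. a j * y j) + c" unfolding affd_def by blast
  have "(\<Sum>j<e+d. (if e \<le> j then a (j - e) else 0) * y j) = (\<Sum>j<d. a j * y (j + e))" for y
  proof -
    have "(\<Sum>j<e+d. (if e \<le> j then a (j - e) else 0) * y j) = (\<Sum>j<e+d. if e \<le> j then a (j - e) * y j else 0)"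
      by (rule sum.cong) auto
    also have "\<dots> = (\<Sum>j\<in>{..<e+d} \<inter> {j. e \<le> j}. a (j - e) * y j)"
      by (simp add: sum.If_cases)
    also have "{..<e+d} \<inter> {j. e \<le> j} = (\<lambda>j. j + e) ` {..<d}"
    proof (rule set_eqI, rule iffI)
      fix x assume "x \<in> {..<e+d} \<inter> {j. e \<le> j}"
      then show "x \<in> (\<lambda>j. j + e) ` {..<d}" by (intro image_eqI[of _ _ "x - e"]) auto
    qed auto
    also have "(\<Sum>j\<in>(\<lambda>j. j + e) ` {..<d}. a (j - e) * y j) = (\<Sum>j<d. a j * y (j + e))"
      by (subst sum.reindex) (auto simp: inj_on_def)
    finally show ?thesis .
  qed
  then show ?thesis unfolding affd_def
    by (intro exI[of _ "\<lambda>j. if e \<le> j then a (j - e) else 0"] exI[of _ c]) (simp add: f)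
qed

lemma affd_upd:
  assumes "affd d f" "affd d g" "j0 < d"
  shows "affd d (\<lambda>y. f (y(j0 := g y)))"
proof -
  from assms(1) obtain a c where f: "\<And>y. f y = (\<Sum>j<d. a j * y j) + c" unfolding affd_def by blast
  have eq: "f (y(j0 := v)) = f y + a j0 * (v - y j0)" for y v
  proof -
    have "(\<Sum>j<d. a j * (y(j0 := v)) j) = a j0 * v + (\<Sum>j\<in>{..<d} - {j0}. a j * y j)"
      using assms(3) by (subst sum.remove[of _ j0]) (auto intro!: sum.cong)
    moreover have "(\<Sum>j<d. a j * y j) = a j0 * y j0 + (\<Sum>j\<in>{..<d} - {j0}. a j * y j)"
      using assms(3) by (subst sum.remove[of _ j0]) auto
    ultimately show ?thesis unfolding f by (simp add: algebra_simps)
  qed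
  show ?thesis unfolding eq
    by (intro affd_add affd_cmult affd_diff assms affd_coord)
qed


lemma affd_upd_eq:
  fixes f :: "(nat \<Rightarrow> real) \<Rightarrow> real"
  assumes "\<And>y. f y = (\<Sum>j<d. a j * y j) + c" "j0 < d"
  shows "f (y(j0 := v)) = f y + a j0 * (v - y j0)"
proof -
  have "(\<Sum>j<d. a j * (y(j0 := v)) j) = a j0 * v + (\<Sum>j\<in>{..<d} - {j0}. a j * y j)"
    using assms(2) by (subst sum.remove[of "{..<d}" j0]) (auto intro!: sum.cong)
  moreover have "(\<Sum>j<d. a j * y j) = a j0 * y j0 + (\<Sum>j\<in>{..<d} - {j0}. a j * y j)"
    using assms(2) by (subst sum.remove[of "{..<d}" j0]) simp_all
  ultimately show ?thesis unfolding assms(1) by (simp add: algebra_simps)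
qed

definition hom :: "((nat \<Rightarrow> real) \<Rightarrow> real) \<Rightarrow> (nat \<Rightarrow> real) \<Rightarrow> real \<Rightarrow> real" where
  "hom f z l = f z + (l - 1) * f (\<lambda>j. 0)"

definition feas :: "(nat \<Rightarrow> (nat \<Rightarrow> real) \<Rightarrow> real) \<Rightarrow> ((nat \<Rightarrow> real) \<Rightarrow> real) set \<Rightarrow> nat \<Rightarrow> (nat \<Rightarrow> real) \<Rightarrow> bool" where
  "feas G E m y \<longleftrightarrow> (\<forall>i<m. 0 \<le> G i y) \<and> (\<forall>e\<in>E. e y = 0)"

definition vecF :: "('n \<Rightarrow> (nat \<Rightarrow> real) \<Rightarrow> real) \<Rightarrow> (nat \<Rightarrow> real) \<Rightarrow> real ^ 'n" where
  "vecF F y = (\<chi> k. F k y)"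

lemma vecF_nth[simp]: "vecF F y $ k = F k y"
  by (simp add: vecF_def)

definition rep :: "nat \<Rightarrow> ('n \<Rightarrow> (nat \<Rightarrow> real) \<Rightarrow> real) \<Rightarrow> (nat \<Rightarrow> (nat \<Rightarrow> real) \<Rightarrow> real)
   \<Rightarrow> ((nat \<Rightarrow> real) \<Rightarrow> real) set \<Rightarrow> nat \<Rightarrow> (real ^ 'n) set \<Rightarrow> bool" where
  "rep d F G E m P \<longleftrightarrow> (\<forall>k. affd d (F k)) \<and> (\<forall>i. affd d (G i)) \<and> finite E \<and> (\<forall>e\<in>E. affd d e)
     \<and> P = vecF F ` {y. feas G E m y}"

definition gef :: "(real ^ 'n) set \<Rightarrow> nat \<Rightarrow> bool" where
  "gef P m \<longleftrightarrow> (\<exists>d F G E. rep d F G E m P)"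

lemma hef_imp_rep:
  assumes "has_ext_formulation P m"
  shows "\<exists>d F G. rep d F G {} m P"
proof -
  from assms obtain d T A t b where P: "P = {x. \<exists>y :: nat \<Rightarrow> real.
                 (\<forall>i<m. (\<Sum>j<d. A i j * y j) \<ge> b i) \<and>
                 x = (\<chi> k. (\<Sum>j<d. T k j * y j) + t $ k)}"
    unfolding has_ext_formulation_def by blast
  define F where "F k y = (\<Sum>j<d. T k j * y j) + t $ k" for k y
  define G where "G i y = (\<Sum>j<d. A i j * y j) + (- b i)" for i y
  have "rep d F G {} m P"
    unfolding rep_def
  proof (intro conjI allI ballI)
    show "affd d (F k)" for k unfolding affd_def F_def by blast
    show "affd d (G i)" for i unfolding affd_def G_def by blast
    show "P = vecF F ` {y. feas G {} m y}"
      unfolding P feas_def vecF_def F_def G_def by auto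
  qed auto
  then show ?thesis by blast
qed

lemma rep_imp_hef:
  assumes "rep d F G {} m P"
  shows "has_ext_formulation P m"
proof -
  from assms have aF: "\<forall>k. \<exists>a c. \<forall>y. F k y = (\<Sum>j<d. a j * y j) + c"
    and aG: "\<forall>i. \<exists>a c. \<forall>y. G i y = (\<Sum>j<d. a j * y j) + c"
    and P: "P = vecF F ` {y. feas G {} m y}"
    unfolding rep_def affd_def by auto
  from aF obtain T tc where T: "\<And>k y. F k y = (\<Sum>j<d. T k j * y j) + tc k" by metis
  from aG obtain A bc where A: "\<And>i y. G i y = (\<Sum>j<d. A i j * y j) + bc i" by metis
  have "P = {x. \<exists>y :: nat \<Rightarrow> real.
                 (\<forall>i<m. (\<Sum>j<d. A i j * y j) \<ge> - bc i) \<and>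
                 x = (\<chi> k. (\<Sum>j<d. T k j * y j) + (\<chi> k. tc k) $ k)}" (is "_ = ?R")
  proof (intro set_eqI iffI)
    fix x assume "x \<in> P"
    then obtain y where y: "feas G {} m y" "x = vecF F y" using P by auto
    show "x \<in> ?R"
      using y unfolding feas_def T A vecF_def by (intro CollectI exI[of _ y]) (auto simp: algebra_simps)
  next
    fix x assume "x \<in> ?R"
    then obtain y where y: "\<forall>i<m. (\<Sum>j<d. A i j * y j) \<ge> - bc i"
      "x = (\<chi> k. (\<Sum>j<d. T k j * y j) + (\<chi> k. tc k) $ k)" by blast
    have "feas G {} m y" unfolding feas_def A using y(1) by (auto simp: algebra_simps)
    moreover have "x = vecF F y" unfolding vecF_def T y(2) by simp
    ultimately show "x \<in> P" using P by blast
  qed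
  note hP = this
  show ?thesis unfolding has_ext_formulation_def
    apply (intro exI[of _ d] exI[of _ T] exI[of _ A] exI[of _ "\<chi> k. tc k"] exI[of _ "\<lambda>i. - bc i"])
    using hP by simp
qed

lemma elim_eqs:
  assumes "rep d F G E m P" "P \<noteq> {}"
  shows "\<exists>F' G'. rep d F' G' {} m P"
  using assms
proof (induction "card E" arbitrary: E F G rule: less_induct)
  case less
  show ?case
  proof (cases "E = {}")
    case True
    then show ?thesis using less.prems by blast
  next
    case False
    then obtain e where eE: "e \<in> E" by blast
    have fin: "finite E" and affF: "\<And>k. affd d (F k)" and affG: "\<And>i. affd d (G i)"
      and affE: "\<And>e. e \<in> E \<Longrightarrow> affd d e" and P: "P = vecF F ` {y. feas G E m y}"
      using less.prems unfolding rep_def by auto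
    define E' where "E' = E - {e}"
    have cardE': "card E' < card E" unfolding E'_def using eE fin by (intro card_Diff1_less)
    obtain a c where e: "\<And>y. e y = (\<Sum>j<d. a j * y j) + c"
      using affE[OF eE] unfolding affd_def by blast
    show ?thesis
    proof (cases "\<forall>j<d. a j = 0")
      case True
      then have ec: "\<And>y. e y = c" unfolding e by simp
      have "c = 0"
      proof (rule ccontr)
        assume "c \<noteq> 0"
        then have "\<And>y. \<not> feas G E m y" unfolding feas_def using eE ec by metis
        then show False using less.prems(2) P by auto
      qed
      then have "\<And>y. feas G E m y \<longleftrightarrow> feas G E' m y"
        unfolding feas_def E'_def using ec eE by auto
      then have "rep d F G E' m P"
        using less.prems(1) unfolding rep_def E'_def by auto
      then show ?thesis using less.hyps[OF cardE'] less.prems(2) by blast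
    next
      case False
      then obtain j0 where j0: "j0 < d" "a j0 \<noteq> 0" by blast
      define g where "g y = y j0 - e y / a j0" for y
      define \<sigma> where "\<sigma> y = y(j0 := g y)" for y
      have affg: "affd d g" unfolding g_def
        using affd_diff[OF affd_coord[OF j0(1)] affd_cmult[OF affE[OF eE], of "1 / a j0"]] by simp
      have aff\<sigma>: "affd d (\<lambda>y. f (\<sigma> y))" if "affd d f" for f
        unfolding \<sigma>_def by (rule affd_upd[OF that affg j0(1)])
      have e\<sigma>: "e (\<sigma> y) = 0" for y
      proof -
        have "e (\<sigma> y) = e y + a j0 * (g y - y j0)" unfolding \<sigma>_def by (rule affd_upd_eq[OF e j0(1)])
        also have "\<dots> = 0" using j0(2) by (simp add: g_def)
        finally show ?thesis .
      qed
      have \<sigma>id: "e y = 0 \<Longrightarrow> \<sigma> y = y" for y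
        unfolding \<sigma>_def g_def by simp
      define F' where "F' k y = F k (\<sigma> y)" for k y
      define G' where "G' i y = G i (\<sigma> y)" for i y
      define E'' where "E'' = (\<lambda>f y. f (\<sigma> y)) ` E'"
      have cardE'': "card E'' < card E"
        using cardE' card_image_le[of E' "\<lambda>f y. f (\<sigma> y)"] fin unfolding E''_def E'_def by simp
      have "P = vecF F' ` {y. feas G' E'' m y}"
      proof
        show "P \<subseteq> vecF F' ` {y. feas G' E'' m y}"
        proof
          fix x assume "x \<in> P"
          then obtain y where y: "feas G E m y" "x = vecF F y" using P by auto
          then have "e y = 0" using eE unfolding feas_def by auto
          then have "\<sigma> y = y" by (rule \<sigma>id)
          then have "feas G' E'' m y" "x = vecF F' y"
            using y unfolding feas_def G'_def E''_def E'_def F'_def vecF_def by auto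
          then show "x \<in> vecF F' ` {y. feas G' E'' m y}" by blast
        qed
      next
        show "vecF F' ` {y. feas G' E'' m y} \<subseteq> P"
        proof
          fix x assume "x \<in> vecF F' ` {y. feas G' E'' m y}"
          then obtain y where y: "feas G' E'' m y" "x = vecF F' y" by auto
          have "feas G E m (\<sigma> y)"
            using y(1) e\<sigma> unfolding feas_def G'_def E''_def E'_def by auto
          moreover have "x = vecF F (\<sigma> y)" using y(2) unfolding F'_def vecF_def by simp
          ultimately show "x \<in> P" using P by auto
        qed
      qed
      moreover have "finite E''" unfolding E''_def E'_def using fin by simp
      ultimately have "rep d F' G' E'' m P"
        unfolding rep_def F'_def G'_def E''_def E'_def
        using aff\<sigma> affF affG affE by auto
      then show ?thesis using less.hyps[OF cardE''] less.prems(2) by blast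
    qed
  qed
qed


lemma rep_leaf:
  assumes "rep d F G E m Q"
  shows "rep d F G (insert (\<lambda>y. F i y - c) E) m {x\<in>Q. x $ i = c}"
proof -
  have aF: "\<And>k. affd d (F k)" and Q: "Q = vecF F ` {y. feas G E m y}"
    using assms unfolding rep_def by auto
  have "affd d (\<lambda>y. F i y - c)" by (rule affd_diff[OF aF affd_const])
  moreover have "{x\<in>Q. x $ i = c} = vecF F ` {y. feas G (insert (\<lambda>y. F i y - c) E) m y}"
    unfolding Q feas_def by auto
  ultimately show ?thesis using assms unfolding rep_def by auto
qed

lemma rep_mono:
  assumes "rep d F G E m P" "m \<le> m'"
  shows "rep d F (\<lambda>i. if i < m then G i else (\<lambda>y. 1)) E m' P"
proof -
  have "feas (\<lambda>i. if i < m then G i else (\<lambda>y. 1)) E m' y \<longleftrightarrow> feas G E m y" for y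
    unfolding feas_def using assms(2) by auto
  then show ?thesis using assms(1) affd_const unfolding rep_def by auto
qed

lemma gef_mono: "gef P m \<Longrightarrow> m \<le> m' \<Longrightarrow> gef P m'"
  unfolding gef_def using rep_mono by blast

lemma rep_conj:
  assumes r1: "rep d1 F1 G1 E1 m1 P1" and r2: "rep d2 F2 G2 E2 m2 P2"
  shows "gef (P1 \<inter> P2) (m1 + m2)"
proof -
  from r1 have aF1: "\<And>k. affd d1 (F1 k)" and aG1: "\<And>i. affd d1 (G1 i)" and aE1: "\<And>e. e \<in> E1 \<Longrightarrow> affd d1 e"
    and fin1: "finite E1" and P1: "P1 = vecF F1 ` {y. feas G1 E1 m1 y}" unfolding rep_def by auto
  from r2 have aF2: "\<And>k. affd d2 (F2 k)" and aG2: "\<And>i. affd d2 (G2 i)" and aE2: "\<And>e. e \<in> E2 \<Longrightarrow> affd d2 e"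
    and fin2: "finite E2" and P2: "P2 = vecF F2 ` {y. feas G2 E2 m2 y}" unfolding rep_def by auto
  define sh where "sh y = (\<lambda>j. y (j + d1))" for y :: "nat \<Rightarrow> real"
  define G where "G i = (if i < m1 then G1 i else (\<lambda>y. G2 (i - m1) (sh y)))" for i
  define E where "E = E1 \<union> (\<lambda>e y. e (sh y)) ` E2 \<union> range (\<lambda>k y. F1 k y - F2 k (sh y))"
  have sh_aff: "affd (d1 + d2) (\<lambda>y. f (sh y))" if "affd d2 f" for f
    unfolding sh_def using affd_shift[OF that, of d1] .
  have mo: "affd (d1 + d2) f" if "affd d1 f" for f using affd_mono[OF that] by simp
  have "rep (d1+d2) F1 G E (m1+m2) (P1 \<inter> P2)"
    unfolding rep_def
  proof (intro conjI allI ballI)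
    show "affd (d1+d2) (F1 k)" for k using mo aF1 .
    show "affd (d1+d2) (G i)" for i unfolding G_def using mo[OF aG1] sh_aff[OF aG2] by auto
    show "finite E" unfolding E_def using fin1 fin2 by simp
    show "affd (d1+d2) e" if "e \<in> E" for e
    proof -
      from that consider "e \<in> E1" | e2 where "e2 \<in> E2" "e = (\<lambda>y. e2 (sh y))"
          | k where "e = (\<lambda>y. F1 k y - F2 k (sh y))" unfolding E_def by blast
      then show ?thesis
      proof cases
        case 1 then show ?thesis by (rule mo[OF aE1])
      next
        case 2 then show ?thesis using sh_aff[OF aE2[OF 2(1)]] by simp
      next
        case 3 then show ?thesis using affd_diff[OF mo[OF aF1] sh_aff[OF aF2]] by simp
      qed
    qed
    show "P1 \<inter> P2 = vecF F1 ` {y. feas G E (m1+m2) y}"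
    proof (intro set_eqI iffI)
      fix x assume "x \<in> P1 \<inter> P2"
      then obtain y1 y2 where y1: "feas G1 E1 m1 y1" "x = vecF F1 y1"
        and y2: "feas G2 E2 m2 y2" "x = vecF F2 y2" using P1 P2 by auto
      define y where "y j = (if j < d1 then y1 j else y2 (j - d1))" for j
      have shy: "sh y = y2" unfolding sh_def y_def by auto
      have loc: "f y = f y1" if "affd d1 f" for f using affd_local[OF that, of y y1] unfolding y_def by auto
      have "feas G E (m1+m2) y" unfolding feas_def
      proof (intro conjI allI impI ballI)
        fix i assume "i < m1 + m2"
        show "0 \<le> G i y"
        proof (cases "i < m1")
          case True
          then show ?thesis using y1(1) loc[OF aG1, of i] unfolding G_def feas_def by simp
        next
          case False
          then show ?thesis using y2(1) \<open>i < m1 + m2\<close> shy unfolding G_def feas_def by simp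
        qed
      next
        fix e assume "e \<in> E"
        then consider "e \<in> E1" | e2 where "e2 \<in> E2" "e = (\<lambda>y. e2 (sh y))"
          | k where "e = (\<lambda>y. F1 k y - F2 k (sh y))" unfolding E_def by blast
        then show "e y = 0"
        proof cases
          case 1 then show ?thesis using y1(1) loc[OF aE1[OF 1]] unfolding feas_def by auto
        next
          case 2 then show ?thesis using y2(1) shy unfolding feas_def by auto
        next
          case 3
          have "F1 k y1 = F2 k y2" using y1(2) y2(2) by (metis vecF_nth)
          then show ?thesis using 3 shy loc[OF aF1] by simp
        qed
      qed
      moreover have "x = vecF F1 y" using y1(2) loc[OF aF1] unfolding vecF_def by simp
      ultimately show "x \<in> vecF F1 ` {y. feas G E (m1+m2) y}" by blast
    next
      fix x assume "x \<in> vecF F1 ` {y. feas G E (m1+m2) y}"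
      then obtain y where y: "feas G E (m1+m2) y" "x = vecF F1 y" by blast
      have yE: "\<forall>e\<in>E. e y = 0" using y(1) unfolding feas_def by simp
      have f1: "feas G1 E1 m1 y" unfolding feas_def
      proof (intro conjI allI impI ballI)
        fix i assume i: "i < m1"
        then have "0 \<le> G i y" using y(1) unfolding feas_def by auto
        then show "0 \<le> G1 i y" using i unfolding G_def by simp
      next
        fix e assume "e \<in> E1" then have "e \<in> E" unfolding E_def by blast
        from bspec[OF yE this] show "e y = 0" .
      qed
      have f2: "feas G2 E2 m2 (sh y)" unfolding feas_def
      proof (intro conjI allI impI ballI)
        fix i assume "i < m2" then have "0 \<le> G (i + m1) y" using y(1) unfolding feas_def by auto
        then show "0 \<le> G2 i (sh y)" unfolding G_def by simp
      next
        fix e assume "e \<in> E2" then have "(\<lambda>y. e (sh y)) \<in> E" unfolding E_def by blast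
        from bspec[OF yE this] show "e (sh y) = 0" by simp
      qed
      have eqv: "vecF F1 y = vecF F2 (sh y)"
      proof -
        have "F1 k y = F2 k (sh y)" for k
        proof -
          have "(\<lambda>y. F1 k y - F2 k (sh y)) \<in> E" unfolding E_def by blast
          from bspec[OF yE this] show ?thesis by simp
        qed
        then show ?thesis unfolding vecF_def by simp
      qed
      have "x \<in> P1" unfolding P1 y(2) using f1 by blast
      moreover have "x \<in> P2" unfolding P2 y(2) eqv using f2 by blast
      ultimately show "x \<in> P1 \<inter> P2" by blast
    qed
  qed
  then show ?thesis unfolding gef_def by blast
qed

definition good :: "('n \<Rightarrow> (nat \<Rightarrow> real) \<Rightarrow> real) \<Rightarrow> (nat \<Rightarrow> (nat \<Rightarrow> real) \<Rightarrow> real)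
   \<Rightarrow> ((nat \<Rightarrow> real) \<Rightarrow> real) set \<Rightarrow> nat \<Rightarrow> bool" where
  "good F G E m \<longleftrightarrow> (\<forall>z l. (\<forall>i<m. 0 \<le> hom (G i) z l) \<and> (\<forall>e\<in>E. hom e z l = 0)
      \<longrightarrow> 0 \<le> l \<and> (l = 0 \<longrightarrow> (\<forall>k. hom (F k) z 0 = 0)))"

lemma affd_scale:
  assumes "affd d f"
  shows "f (\<lambda>j. l * y j) = l * f y + (1 - l) * f (\<lambda>j. 0)"
  using affd_comb[OF assms, of l y 0 "\<lambda>j. 0"] by simp

lemma hom_scale:
  assumes "affd d f"
  shows "hom f (\<lambda>j. l * y j) l = l * f y"
  unfolding hom_def affd_scale[OF assms] by (simp add: algebra_simps)

lemma hom_local: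
  assumes "affd d f" "\<And>j. j < d \<Longrightarrow> z j = z' j"
  shows "hom f z l = hom f z' l"
  unfolding hom_def using affd_local[OF assms] by simp

lemma bounded_ray:
  fixes a v :: "'a::real_normed_vector"
  assumes "bounded P" "\<And>t. t \<ge> 0 \<Longrightarrow> a + t *\<^sub>R v \<in> P"
  shows "v = 0"
proof (rule ccontr)
  assume v: "v \<noteq> 0"
  obtain B where B: "\<And>x. x \<in> P \<Longrightarrow> norm x \<le> B" using assms(1) bounded_iff by blast
  have "norm a \<le> B" using B[OF assms(2)[of 0]] by simp
  define t where "t = (B + norm a + 1) / norm v"
  have nv: "norm v > 0" using v by simp
  have "0 \<le> B + norm a + 1" using \<open>norm a \<le> B\<close> norm_ge_zero[of a] by linarith
  then have t0: "t \<ge> 0" unfolding t_def using nv by (simp add: divide_nonneg_pos)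
  have "norm (t *\<^sub>R v) = B + norm a + 1" unfolding t_def using nv \<open>0 \<le> B + norm a + 1\<close> by simp
  moreover have "norm (t *\<^sub>R v) \<le> norm (a + t *\<^sub>R v) + norm a"
    using norm_triangle_ineq4[of "a + t *\<^sub>R v" a] by (simp add: norm_minus_commute)
  moreover have "norm (a + t *\<^sub>R v) \<le> B" using B[OF assms(2)[OF t0]] .
  ultimately show False by simp
qed

lemma good_rep:
  assumes r: "rep d F G E m P" and b: "bounded P" and ne: "P \<noteq> {}" and ns: "\<And>p. P \<noteq> {p}"
  shows "good F G E m"
  unfolding good_def
proof (intro allI impI)
  fix z l assume h: "(\<forall>i<m. 0 \<le> hom (G i) z l) \<and> (\<forall>e\<in>E. hom e z l = 0)"
  from r have aF: "\<And>k. affd d (F k)" and aG: "\<And>i. affd d (G i)" and aE: "\<And>e. e \<in> E \<Longrightarrow> affd d e"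
    and P: "P = vecF F ` {y. feas G E m y}" unfolding rep_def by auto
  obtain y0 where y0: "feas G E m y0" using ne P by auto
  have ray: "F k v = F k (\<lambda>j. 0)" if "\<And>t. t \<ge> 0 \<Longrightarrow> feas G E m (\<lambda>j. 1 * u j + t * v j)" for u v k
  proof -
    have "vecF F v - vecF F (\<lambda>j. 0) = 0"
    proof (rule bounded_ray[OF b])
      fix t :: real assume t: "t \<ge> 0"
      have "vecF F u + t *\<^sub>R (vecF F v - vecF F (\<lambda>j. 0)) = vecF F (\<lambda>j. 1 * u j + t * v j)"
      proof (subst vec_eq_iff, intro allI)
        fix k
        have c: "F k (\<lambda>j. 1 * u j + t * v j) = 1 * F k u + t * F k v + (1 - 1 - t) * F k (\<lambda>j. 0)"
          by (rule affd_comb[OF aF])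
        show "(vecF F u + t *\<^sub>R (vecF F v - vecF F (\<lambda>j. 0))) $ k = vecF F (\<lambda>j. 1 * u j + t * v j) $ k"
          unfolding vecF_nth c by (simp add: algebra_simps)
      qed
      then show "vecF F u + t *\<^sub>R (vecF F v - vecF F (\<lambda>j. 0)) \<in> P" using P that[OF t] by auto
    qed
    then have "vecF F v $ k - vecF F (\<lambda>j. 0) $ k = 0" by (metis vector_minus_component zero_index)
    then show ?thesis by simp
  qed
  show "0 \<le> l \<and> (l = 0 \<longrightarrow> (\<forall>k. hom (F k) z 0 = 0))"
  proof (intro conjI impI allI)
    show "0 \<le> l"
    proof (rule ccontr)
      assume "\<not> 0 \<le> l" then have l: "l < 0" by simp
      define w where "w j = z j / l" for j
      have zw: "z = (\<lambda>j. l * w j)" unfolding w_def using l by auto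
      have Gw: "G i w \<le> 0" if "i < m" for i
      proof -
        have hs: "hom (G i) z l = l * G i w" unfolding zw by (rule hom_scale[OF aG])
        have "0 \<le> hom (G i) z l" using h that by blast
        then have "0 \<le> l * G i w" unfolding hs .
        then show ?thesis using l by (simp add: zero_le_mult_iff)
      qed
      have Ew: "e w = 0" if "e \<in> E" for e
      proof -
        have hs: "hom e z l = l * e w" unfolding zw by (rule hom_scale[OF aE[OF that]])
        have "hom e z l = 0" using h that by blast
        then have "l * e w = 0" unfolding hs .
        then show ?thesis using l by simp
      qed
      have "vecF F y = vecF F w" if y: "feas G E m y" for y
      proof -
        have "F k (\<lambda>j. y j - w j) = F k (\<lambda>j. 0)" for k
        proof (rule ray)
          fix t :: real assume t: "t \<ge> 0"
          have eq: "(\<lambda>j. 1 * y j + t * (y j - w j)) = (\<lambda>j. (1 + t) * y j + (- t) * w j)"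
            by (auto simp: algebra_simps)
          show "feas G E m (\<lambda>j. 1 * y j + t * (y j - w j))"
            unfolding eq feas_def
          proof (intro conjI allI impI ballI)
            fix i assume i: "i < m"
            have c: "G i (\<lambda>j. (1 + t) * y j + (- t) * w j) = (1 + t) * G i y + (- t) * G i w + (1 - (1 + t) - (- t)) * G i (\<lambda>j. 0)"
              by (rule affd_comb[OF aG])
            have "0 \<le> (1 + t) * G i y" using y i t unfolding feas_def by simp
            moreover have "0 \<le> (- t) * G i w" using Gw[OF i] t by (simp add: mult_nonneg_nonpos)
            ultimately show "0 \<le> G i (\<lambda>j. (1 + t) * y j + (- t) * w j)"
              unfolding c by simp
          next
            fix e assume e: "e \<in> E"
            have c: "e (\<lambda>j. (1 + t) * y j + (- t) * w j) = (1 + t) * e y + (- t) * e w + (1 - (1 + t) - (- t)) * e (\<lambda>j. 0)"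
              by (rule affd_comb[OF aE[OF e]])
            show "e (\<lambda>j. (1 + t) * y j + (- t) * w j) = 0"
              using y Ew[OF e] e unfolding feas_def c by simp
          qed
        qed
        moreover have "F k (\<lambda>j. 1 * y j + (-1) * w j) = 1 * F k y + (-1) * F k w + (1 - 1 - (-1)) * F k (\<lambda>j. 0)" for k
          by (rule affd_comb[OF aF])
        ultimately show ?thesis unfolding vec_eq_iff by simp
      qed
      then have "P \<subseteq> {vecF F w}" using P by auto
      then have "P = {vecF F w}" using ne by blast
      with ns show False by blast
    qed
  next
    fix k assume l0: "l = 0"
    have "F k z = F k (\<lambda>j. 0)"
    proof (rule ray)
      fix t :: real assume t: "t \<ge> 0"
      show "feas G E m (\<lambda>j. 1 * y0 j + t * z j)"
        unfolding feas_def
      proof (intro conjI allI impI ballI)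
        fix i assume i: "i < m"
        have c: "G i (\<lambda>j. 1 * y0 j + t * z j) = 1 * G i y0 + t * G i z + (1 - 1 - t) * G i (\<lambda>j. 0)"
          by (rule affd_comb[OF aG])
        have "0 \<le> G i y0" using y0 i unfolding feas_def by simp
        moreover have "0 \<le> hom (G i) z 0" using h i l0 by simp
        then have "0 \<le> t * (G i z - G i (\<lambda>j. 0))" using t unfolding hom_def by simp
        ultimately show "0 \<le> G i (\<lambda>j. 1 * y0 j + t * z j)"
          unfolding c by (simp add: algebra_simps)
      next
        fix e assume e: "e \<in> E"
        have c: "e (\<lambda>j. 1 * y0 j + t * z j) = 1 * e y0 + t * e z + (1 - 1 - t) * e (\<lambda>j. 0)"
          by (rule affd_comb[OF aE[OF e]])
        have "hom e z 0 = 0" using h l0 e by simp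
        then have "e z - e (\<lambda>j. 0) = 0" unfolding hom_def by simp
        then have "t * e z + (1 - 1 - t) * e (\<lambda>j. 0) = 0" by (simp add: algebra_simps)
        moreover have "e y0 = 0" using y0 e unfolding feas_def by simp
        ultimately show "e (\<lambda>j. 1 * y0 j + t * z j) = 0"
          unfolding c by simp
      qed
    qed
    then show "hom (F k) z 0 = 0" unfolding hom_def by simp
  qed
qed

lemma rep_single:
  assumes "1 \<le> m"
  shows "rep 0 (\<lambda>k y. p $ k) (\<lambda>i y. 1) {} m {p} \<and> good (\<lambda>k y. p $ k) (\<lambda>i y. 1) {} m"
proof
  have "vecF (\<lambda>k y. p $ k) y = p" for y unfolding vec_eq_iff by simp
  then show "rep 0 (\<lambda>k y. p $ k) (\<lambda>i y. 1) {} m {p}"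
    unfolding rep_def feas_def using affd_const by auto
  show "good (\<lambda>k y. p $ k) (\<lambda>i y. 1) {} m"
    unfolding good_def hom_def using assms by (auto simp: Suc_le_eq)
qed

lemma to_good:
  assumes "rep d F G E m P" "1 \<le> m" "bounded P" "P \<noteq> {}"
  shows "\<exists>d F G E. rep d F G E m P \<and> good F G E m"
proof (cases "\<exists>p. P = {p}")
  case True
  then show ?thesis using rep_single[OF assms(2)] by blast
next
  case False
  then show ?thesis using good_rep[OF assms(1,3,4)] assms(1) by blast
qed


lemma hom_point:
  assumes r: "rep d F G E m P" and g: "good F G E m" and ne: "P \<noteq> {}"
    and h1: "\<forall>i<m. 0 \<le> hom (G i) z l" and h2: "\<forall>e\<in>E. hom e z l = 0"
  shows "0 \<le> l \<and> (\<exists>p\<in>P. \<forall>k. hom (F k) z l = l * p $ k)"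
proof -
  from r have aF: "\<And>k. affd d (F k)" and aG: "\<And>i. affd d (G i)" and aE: "\<And>e. e \<in> E \<Longrightarrow> affd d e"
    and P: "P = vecF F ` {y. feas G E m y}" unfolding rep_def by auto
  have gg: "0 \<le> l \<and> (l = 0 \<longrightarrow> (\<forall>k. hom (F k) z 0 = 0))"
    using g h1 h2 unfolding good_def by blast
  show ?thesis
  proof (cases "l = 0")
    case True
    obtain p where "p \<in> P" using ne by blast
    then show ?thesis using gg True by auto
  next
    case False
    then have lp: "l > 0" using gg by simp
    define y1 where "y1 j = z j / l" for j
    have zy: "z = (\<lambda>j. l * y1 j)" unfolding y1_def using lp by auto
    have hs: "hom f z l = l * f y1" if "affd d f" for f unfolding zy by (rule hom_scale[OF that])
    have "feas G E m y1" unfolding feas_def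
    proof (intro conjI allI impI ballI)
      fix i assume "i < m"
      then have "0 \<le> hom (G i) z l" using h1 by blast
      then have "0 \<le> l * G i y1" unfolding hs[OF aG] .
      then show "0 \<le> G i y1" using lp by (simp add: zero_le_mult_iff)
    next
      fix e assume e: "e \<in> E"
      then have "hom e z l = 0" using h2 by blast
      then have "l * e y1 = 0" unfolding hs[OF aE[OF e]] .
      then show "e y1 = 0" using lp by simp
    qed
    then have "vecF F y1 \<in> P" using P by blast
    moreover have "\<forall>k. hom (F k) z l = l * vecF F y1 $ k" using hs[OF aF] by simp
    ultimately show ?thesis using gg by blast
  qed
qed

lemma rep_disj:
  assumes r1: "rep d1 F1 G1 E1 m1 P1" and g1: "good F1 G1 E1 m1"
    and r2: "rep d2 F2 G2 E2 m2 P2" and g2: "good F2 G2 E2 m2"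
    and c1: "convex P1" and c2: "convex P2" and n1: "P1 \<noteq> {}" and n2: "P2 \<noteq> {}"
  shows "gef (convex hull (P1 \<union> P2)) (m1 + m2)"
proof -
  from r1 have aF1: "\<And>k. affd d1 (F1 k)" and aG1: "\<And>i. affd d1 (G1 i)" and aE1: "\<And>e. e \<in> E1 \<Longrightarrow> affd d1 e"
    and fin1: "finite E1" and P1: "P1 = vecF F1 ` {y. feas G1 E1 m1 y}" unfolding rep_def by auto
  from r2 have aF2: "\<And>k. affd d2 (F2 k)" and aG2: "\<And>i. affd d2 (G2 i)" and aE2: "\<And>e. e \<in> E2 \<Longrightarrow> affd d2 e"
    and fin2: "finite E2" and P2: "P2 = vecF F2 ` {y. feas G2 E2 m2 y}" unfolding rep_def by auto
  define N where "N = d1 + d2"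
  define sh where "sh y = (\<lambda>j. y (j + d1))" for y :: "nat \<Rightarrow> real"
  define H1 where "H1 = (\<lambda>(f :: (nat \<Rightarrow> real) \<Rightarrow> real) y. hom f y (y N))"
  define H2 where "H2 = (\<lambda>(f :: (nat \<Rightarrow> real) \<Rightarrow> real) y. hom f (sh y) (1 - y N))"
  define F where "F = (\<lambda>k y. H1 (F1 k) y + H2 (F2 k) y)"
  define G where "G = (\<lambda>i. if i < m1 then H1 (G1 i) else H2 (G2 (i - m1)))"
  define E where "E = H1 ` E1 \<union> H2 ` E2"
  have co: "affd (N+1) (\<lambda>y. y N)" by (rule affd_coord) simp
  have aH1: "affd (N+1) (H1 f)" if "affd d1 f" for f
  proof -
    have eq: "H1 f = (\<lambda>y. f y + (f (\<lambda>j. 0) * y N + (- f (\<lambda>j. 0))))"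
      unfolding H1_def hom_def by (rule ext) (simp add: algebra_simps)
    have mf: "affd (N+1) f" using affd_mono[OF that] unfolding N_def by simp
    show ?thesis unfolding eq by (intro affd_add affd_cmult co affd_const mf)
  qed
  have aH2: "affd (N+1) (H2 f)" if "affd d2 f" for f
  proof -
    have eq: "H2 f = (\<lambda>y. f (sh y) + ((- f (\<lambda>j. 0)) * y N + 0))"
      unfolding H2_def hom_def by (rule ext) (simp add: algebra_simps)
    have "affd (d1 + d2) (\<lambda>y. f (sh y))" unfolding sh_def by (rule affd_shift[OF that])
    then have mf: "affd (N+1) (\<lambda>y. f (sh y))" using affd_mono unfolding N_def by fastforce
    show ?thesis unfolding eq by (intro affd_add affd_cmult co affd_const mf)
  qed
  have hull: "convex hull (P1 \<union> P2) =
    {u *\<^sub>R s + v *\<^sub>R t | u v s t. u \<ge> 0 \<and> v \<ge> 0 \<and> u + v = 1 \<and> s \<in> P1 \<and> t \<in> P2}"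
    by (rule convex_hull_union_two[OF c1 n1 c2 n2])
  have "rep (N+1) F G E (m1+m2) (convex hull (P1 \<union> P2))"
    unfolding rep_def
  proof (intro conjI allI ballI)
    show "affd (N+1) (F k)" for k unfolding F_def by (intro affd_add aH1 aH2 aF1 aF2)
    show "affd (N+1) (G i)" for i unfolding G_def using aH1[OF aG1] aH2[OF aG2] by simp
    show "finite E" unfolding E_def using fin1 fin2 by simp
    show "affd (N+1) e" if "e \<in> E" for e using that aH1[OF aE1] aH2[OF aE2] unfolding E_def by blast
    show "convex hull (P1 \<union> P2) = vecF F ` {y. feas G E (m1+m2) y}"
    proof (intro set_eqI iffI)
      fix x assume "x \<in> convex hull (P1 \<union> P2)"
      then obtain u v s t where uv: "u \<ge> 0" "v \<ge> 0" "u + v = 1" and st: "s \<in> P1" "t \<in> P2"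
        and x: "x = u *\<^sub>R s + v *\<^sub>R t" unfolding hull by blast
      from st obtain y1 y2 where y1: "feas G1 E1 m1 y1" "s = vecF F1 y1"
        and y2: "feas G2 E2 m2 y2" "t = vecF F2 y2" using P1 P2 by blast
      define y where "y j = (if j < d1 then u * y1 j else if j < N then v * y2 (j - d1)
         else if j = N then u else 0)" for j
      have yN: "y N = u" unfolding y_def N_def by simp
      have L1: "H1 f y = u * f y1" if "affd d1 f" for f
      proof -
        have "H1 f y = hom f y u" unfolding H1_def yN ..
        also have "\<dots> = hom f (\<lambda>j. u * y1 j) u" by (rule hom_local[OF that]) (simp add: y_def)
        also have "\<dots> = u * f y1" by (rule hom_scale[OF that])
        finally show ?thesis .
      qed
      have L2: "H2 f y = v * f y2" if "affd d2 f" for f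
      proof -
        have vu: "1 - u = v" using uv(3) by linarith
        have "H2 f y = hom f (sh y) v" unfolding H2_def yN vu ..
        also have "\<dots> = hom f (\<lambda>j. v * y2 j) v" by (rule hom_local[OF that]) (simp add: y_def sh_def N_def)
        also have "\<dots> = v * f y2" by (rule hom_scale[OF that])
        finally show ?thesis .
      qed
      have "feas G E (m1+m2) y" unfolding feas_def
      proof (intro conjI allI impI ballI)
        fix i assume i: "i < m1 + m2"
        show "0 \<le> G i y"
        proof (cases "i < m1")
          case True
          then have "0 \<le> G1 i y1" using y1(1) unfolding feas_def by simp
          then show ?thesis using True L1[OF aG1] uv(1) unfolding G_def by simp
        next
          case False
          then have "0 \<le> G2 (i - m1) y2" using y2(1) i unfolding feas_def by simp
          then show ?thesis using False L2[OF aG2] uv(2) unfolding G_def by simp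
        qed
      next
        fix e assume "e \<in> E"
        then consider e1 where "e1 \<in> E1" "e = H1 e1" | e2 where "e2 \<in> E2" "e = H2 e2"
          unfolding E_def by blast
        then show "e y = 0"
        proof cases
          case 1 then show ?thesis using L1[OF aE1[OF 1(1)]] y1(1) unfolding feas_def by simp
        next
          case 2 then show ?thesis using L2[OF aE2[OF 2(1)]] y2(1) unfolding feas_def by simp
        qed
      qed
      moreover have "x = vecF F y"
        unfolding vec_eq_iff x y1(2) y2(2) F_def using L1[OF aF1] L2[OF aF2] by simp
      ultimately show "x \<in> vecF F ` {y. feas G E (m1+m2) y}" by blast
    next
      fix x assume "x \<in> vecF F ` {y. feas G E (m1+m2) y}"
      then obtain y where y: "feas G E (m1+m2) y" "x = vecF F y" by blast
      define l where "l = y N"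
      have yE: "\<forall>e\<in>E. e y = 0" using y(1) unfolding feas_def by simp
      have h1: "\<forall>i<m1. 0 \<le> hom (G1 i) y l"
      proof (intro allI impI)
        fix i assume i: "i < m1"
        then have "0 \<le> G i y" using y(1) unfolding feas_def by simp
        then show "0 \<le> hom (G1 i) y l" using i unfolding G_def H1_def l_def by simp
      qed
      have h1e: "\<forall>e\<in>E1. hom e y l = 0"
      proof
        fix e assume "e \<in> E1" then have "H1 e \<in> E" unfolding E_def by blast
        from bspec[OF yE this] show "hom e y l = 0" unfolding H1_def l_def by simp
      qed
      have h2: "\<forall>i<m2. 0 \<le> hom (G2 i) (sh y) (1 - l)"
      proof (intro allI impI)
        fix i assume i: "i < m2"
        then have "0 \<le> G (i + m1) y" using y(1) unfolding feas_def by simp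
        then show "0 \<le> hom (G2 i) (sh y) (1 - l)" unfolding G_def H2_def l_def by simp
      qed
      have h2e: "\<forall>e\<in>E2. hom e (sh y) (1 - l) = 0"
      proof
        fix e assume "e \<in> E2" then have "H2 e \<in> E" unfolding E_def by blast
        from bspec[OF yE this] show "hom e (sh y) (1 - l) = 0" unfolding H2_def l_def by simp
      qed
      obtain p1 where l0: "0 \<le> l" and p1: "p1 \<in> P1" "\<forall>k. hom (F1 k) y l = l * p1 $ k"
        using hom_point[OF r1 g1 n1 h1 h1e] by blast
      obtain p2 where l1: "0 \<le> 1 - l" and p2: "p2 \<in> P2" "\<forall>k. hom (F2 k) (sh y) (1 - l) = (1 - l) * p2 $ k"
        using hom_point[OF r2 g2 n2 h2 h2e] by blast
      have "x = l *\<^sub>R p1 + (1 - l) *\<^sub>R p2"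
        unfolding vec_eq_iff y(2) F_def H1_def H2_def using p1(2) p2(2) unfolding l_def by simp
      then show "x \<in> convex hull (P1 \<union> P2)" unfolding hull using l0 l1 p1(1) p2(1) by force
    qed
  qed
  then show ?thesis unfolding gef_def by blast
qed

lemma fsize_pos: "1 \<le> fsize \<phi>"
  by (induction \<phi>) auto

lemma convex_coord_eq:
  fixes Q :: "(real ^ 'n) set"
  assumes Q: "convex Q"
  shows "convex {x\<in>Q. x $ i = (c::real)}"
proof -
  have "{x. axis i 1 \<bullet> x = c} = {x :: real ^ 'n. x $ i = c}" by (simp add: inner_axis')
  then have "convex {x :: real ^ 'n. x $ i = c}" by (metis convex_hyperplane)
  moreover have "{x\<in>Q. x $ i = c} = Q \<inter> {x. x $ i = c}" by auto
  ultimately show ?thesis using convex_Int Q by metis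
qed

lemma fapply_sub: "convex Q \<Longrightarrow> fapply \<phi> Q \<subseteq> Q"
proof (induction \<phi>)
  case (Disj a b)
  then show ?case by (simp add: hull_minimal)
qed auto

lemma fapply_convex: "convex Q \<Longrightarrow> convex (fapply \<phi> Q)"
  by (induction \<phi>) (auto simp: convex_coord_eq convex_Int)

lemma fapply_polytope:
  fixes Q :: "(real ^ 'n::finite) set"
  shows "polytope Q \<Longrightarrow> polytope (fapply \<phi> Q)"
proof (induction \<phi>)
  case (PosVar i)
  have "{x. axis i 1 \<bullet> x = (1::real)} = {x :: real ^ 'n. x $ i = 1}" by (simp add: inner_axis')
  then have "polyhedron {x :: real ^ 'n. x $ i = 1}" by (metis polyhedron_hyperplane)
  moreover have "fapply (PosVar i) Q = Q \<inter> {x. x $ i = 1}" by auto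
  ultimately show ?case using polytope_Int_polyhedron PosVar by metis
next
  case (NegVar i)
  have "{x. axis i 1 \<bullet> x = (0::real)} = {x :: real ^ 'n. x $ i = 0}" by (simp add: inner_axis')
  then have "polyhedron {x :: real ^ 'n. x $ i = 0}" by (metis polyhedron_hyperplane)
  moreover have "fapply (NegVar i) Q = Q \<inter> {x. x $ i = 0}" by auto
  ultimately show ?case using polytope_Int_polyhedron NegVar by metis
next
  case (Conj a b)
  then show ?case by (simp add: polytope_Int)
next
  case (Disj a b)
  then obtain V W where V: "finite V" "fapply a Q = convex hull V" and W: "finite W" "fapply b Q = convex hull W"
    unfolding polytope_def by auto
  have "convex hull (convex hull V \<union> convex hull W) = convex hull (V \<union> W)"
    by (metis hull_Un_left hull_Un_right)
  then show ?case using V W by (simp add: polytope_convex_hull)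
qed


lemma polytope_hef:
  fixes Q :: "(real ^ 'n::finite) set"
  assumes "polytope Q" "Q \<noteq> {}"
  shows "\<exists>m. has_ext_formulation Q m"
proof -
  obtain V where V: "finite V" "Q = convex hull V" using assms(1) unfolding polytope_def by blast
  obtain k :: nat and f where kf: "V = f ` {i. i < k}" using finite_imp_nat_seg_image_inj_on[OF V(1)] by blast
  have Vk: "V = f ` {..<k}" using kf by (simp add: lessThan_def)
  define F where "F = (\<lambda>kk y. \<Sum>j<k. y j * f j $ kk)"
  define G where "G = (\<lambda>i. if i < k then (\<lambda>y :: nat \<Rightarrow> real. y i) else (\<lambda>y. 1))"
  define E where "E = {\<lambda>y :: nat \<Rightarrow> real. (\<Sum>j<k. y j) - 1}"
  have vF: "vecF F y = (\<Sum>j<k. y j *\<^sub>R f j)" for y unfolding vec_eq_iff F_def by simp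
  have fe: "feas G E k y \<longleftrightarrow> (\<forall>i<k. 0 \<le> y i) \<and> (\<Sum>j<k. y j) = 1" for y
    unfolding feas_def G_def E_def by auto
  define S where "S = vecF F ` {y. feas G E k y}"
  have "Q = S"
  proof
    show "S \<subseteq> Q"
    proof
      fix x assume "x \<in> S"
      then obtain y where y: "(\<forall>i<k. 0 \<le> y i)" "(\<Sum>j<k. y j) = 1" "x = (\<Sum>j<k. y j *\<^sub>R f j)"
        unfolding S_def fe vF by blast
      have "(\<Sum>j\<in>{..<k}. y j *\<^sub>R f j) \<in> convex hull V"
        by (rule convex_sum) (use y Vk hull_subset[of V convex] in auto)
      then show "x \<in> Q" using y(3) V(2) by simp
    qed
  next
    show "Q \<subseteq> S" unfolding V(2)
    proof (rule hull_minimal)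
      show "V \<subseteq> S"
      proof
        fix x assume "x \<in> V"
        then obtain j where j: "j < k" "x = f j" using Vk by auto
        define y where "y i = (if i = j then 1 else (0::real))" for i
        have "(\<Sum>i<k. y i) = 1" unfolding y_def using j(1) by simp
        moreover have "(\<Sum>i<k. y i *\<^sub>R f i) = f j"
        proof -
          have "(\<Sum>i<k. y i *\<^sub>R f i) = (\<Sum>i<k. if i = j then f i else 0)"
            by (rule sum.cong) (auto simp: y_def)
          then show ?thesis using j(1) by simp
        qed
        moreover have "\<forall>i<k. 0 \<le> y i" unfolding y_def by simp
        ultimately show "x \<in> S" unfolding S_def using j(2) fe vF by (metis (mono_tags, lifting) image_eqI mem_Collect_eq)
      qed
      show "convex S"
        unfolding convex_def
      proof (intro ballI allI impI)
        fix x1 x2 and u v :: real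
        assume x1: "x1 \<in> S" and x2: "x2 \<in> S" and u: "0 \<le> u" and v: "0 \<le> v" and uv: "u + v = 1"
        obtain y1 where y1: "(\<forall>i<k. 0 \<le> y1 i)" "(\<Sum>j<k. y1 j) = 1" "x1 = (\<Sum>j<k. y1 j *\<^sub>R f j)"
          using x1 unfolding S_def fe vF by blast
        obtain y2 where y2: "(\<forall>i<k. 0 \<le> y2 i)" "(\<Sum>j<k. y2 j) = 1" "x2 = (\<Sum>j<k. y2 j *\<^sub>R f j)"
          using x2 unfolding S_def fe vF by blast
        define y where "y j = u * y1 j + v * y2 j" for j
        have "\<forall>i<k. 0 \<le> y i" unfolding y_def using y1(1) y2(1) u v by simp
        moreover have "(\<Sum>j<k. y j) = 1" unfolding y_def using y1(2) y2(2) uv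
          by (simp add: sum.distrib sum_distrib_left[symmetric])
        moreover have "(\<Sum>j<k. y j *\<^sub>R f j) = u *\<^sub>R x1 + v *\<^sub>R x2"
          unfolding y_def y1(3) y2(3) by (simp add: scaleR_add_left sum.distrib scaleR_sum_right)
        ultimately show "u *\<^sub>R x1 + v *\<^sub>R x2 \<in> S" unfolding S_def using fe vF
          by (metis (mono_tags, lifting) image_eqI mem_Collect_eq)
      qed
    qed
  qed
  have "rep k F G E k Q"
    unfolding rep_def
  proof (intro conjI allI ballI)
    show "affd k (F kk)" for kk unfolding F_def affd_def
      by (intro exI[of _ "\<lambda>j. f j $ kk"] exI[of _ 0]) (simp add: mult.commute)
    show "affd k (G i)" for i unfolding G_def using affd_coord[of i k] affd_const by simp
    show "finite E" unfolding E_def by simp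
    show "affd k e" if "e \<in> E" for e using that unfolding E_def affd_def
      by (auto intro!: exI[of _ "\<lambda>j. 1"] exI[of _ "-1"])
    show "Q = vecF F ` {y. feas G E k y}" using \<open>Q = S\<close> unfolding S_def .
  qed
  then obtain F' G' where "rep k F' G' {} k Q" using elim_eqs assms(2) by blast
  then show ?thesis using rep_imp_hef by blast
qed

lemma main_ind:
  fixes Q :: "(real ^ 'n::finite) set"
  assumes g: "gef Q m" and m: "1 \<le> m" and c: "convex Q" and b: "bounded Q"
  shows "fapply \<phi> Q \<noteq> {} \<Longrightarrow> gef (fapply \<phi> Q) (fsize \<phi> * m)"
proof (induction \<phi>)
  case (PosVar i)
  from g obtain d F G E where "rep d F G E m Q" unfolding gef_def by blast
  from rep_leaf[OF this, of i 1] show ?case unfolding gef_def by auto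
next
  case (NegVar i)
  from g obtain d F G E where "rep d F G E m Q" unfolding gef_def by blast
  from rep_leaf[OF this, of i 0] show ?case unfolding gef_def by auto
next
  case (Conj a b)
  then have "fapply a Q \<noteq> {}" "fapply b Q \<noteq> {}" by auto
  then have "gef (fapply a Q) (fsize a * m)" "gef (fapply b Q) (fsize b * m)" using Conj by auto
  then obtain d1 F1 G1 E1 d2 F2 G2 E2 where "rep d1 F1 G1 E1 (fsize a * m) (fapply a Q)"
    "rep d2 F2 G2 E2 (fsize b * m) (fapply b Q)" unfolding gef_def by blast
  from rep_conj[OF this] show ?case by (simp add: add_mult_distrib)
next
  case (Disj a b)
  let ?A = "fapply a Q" and ?B = "fapply b Q"
  have cA: "convex ?A" and cB: "convex ?B" using fapply_convex c by auto
  show ?case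
  proof (cases "?A = {}")
    case True
    then have "fapply (Disj a b) Q = ?B" using cB by (simp add: convex_hull_eq)
    then have "?B \<noteq> {}" using Disj.prems by simp
    then have "gef ?B (fsize b * m)" using Disj.IH(2) by simp
    then have "gef ?B (fsize a * m + fsize b * m)" by (rule gef_mono) simp
    then show ?thesis using \<open>fapply (Disj a b) Q = ?B\<close> by (simp add: add_mult_distrib)
  next
    case nA: False
    show ?thesis
    proof (cases "?B = {}")
      case True
      then have "fapply (Disj a b) Q = ?A" using cA by (simp add: convex_hull_eq)
      have "gef ?A (fsize a * m)" using Disj.IH(1) nA by simp
      then have "gef ?A (fsize a * m + fsize b * m)" by (rule gef_mono) simp
      then show ?thesis using \<open>fapply (Disj a b) Q = ?A\<close> by (simp add: add_mult_distrib)
    next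
      case nB: False
      have "gef ?A (fsize a * m)" using Disj.IH(1) nA by simp
      moreover have "gef ?B (fsize b * m)" using Disj.IH(2) nB by simp
      moreover have "1 \<le> fsize a * m" "1 \<le> fsize b * m"
        using fsize_pos[of a] fsize_pos[of b] m by (simp_all add: one_le_mult_iff)
      moreover have "bounded ?A" "bounded ?B" using fapply_sub[OF c] b bounded_subset by blast+
      ultimately obtain d1 F1 G1 E1 d2 F2 G2 E2 where
        r1: "rep d1 F1 G1 E1 (fsize a * m) ?A" "good F1 G1 E1 (fsize a * m)"
        and r2: "rep d2 F2 G2 E2 (fsize b * m) ?B" "good F2 G2 E2 (fsize b * m)"
        using to_good nA nB unfolding gef_def by metis
      from rep_disj[OF r1 r2 cA cB nA nB] show ?thesis by (simp add: add_mult_distrib)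
    qed
  qed
qed

theorem proposition4p2:
  fixes \<phi> :: "'n::finite rformula" and Q :: "(real ^ 'n) set"
  assumes "polytope Q"
    and "\<forall>x\<in>Q. \<forall>i. 0 \<le> x $ i \<and> x $ i \<le> 1"
    and "fapply \<phi> Q \<noteq> {}"
  shows "polytope (fapply \<phi> Q) \<and> xc (fapply \<phi> Q) \<le> fsize \<phi> * xc Q"
proof
  show "polytope (fapply \<phi> Q)" using fapply_polytope[OF assms(1)] .
  have cQ: "convex Q" using assms(1) by (rule polytope_imp_convex)
  have bQ: "bounded Q" using assms(1) by (rule polytope_imp_bounded)
  have sub: "fapply \<phi> Q \<subseteq> Q" by (rule fapply_sub[OF cQ])
  then have Qne: "Q \<noteq> {}" using assms(3) by blast
  obtain m0 where "has_ext_formulation Q m0" using polytope_hef[OF assms(1) Qne] by blast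
  then have hQ: "has_ext_formulation Q (xc Q)" unfolding xc_def by (rule LeastI)
  then obtain d F G where rQ: "rep d F G {} (xc Q) Q" using hef_imp_rep by blast
  show "xc (fapply \<phi> Q) \<le> fsize \<phi> * xc Q"
  proof (cases "xc Q = 0")
    case True
    have "\<exists>q. Q = {q}"
    proof (rule ccontr)
      assume ns: "\<not> (\<exists>q. Q = {q})"
      have "good F G {} (xc Q)" using good_rep[OF rQ bQ Qne] ns by blast
      then have "0 \<le> (-1::real)" unfolding good_def True by auto
      then show False by simp
    qed
    then have "fapply \<phi> Q = Q" using sub assms(3) by auto
    then show ?thesis using True by simp
  next
    case False
    then have "1 \<le> xc Q" by simp
    have "gef Q (xc Q)" using rQ unfolding gef_def by blast
    from main_ind[OF this \<open>1 \<le> xc Q\<close> cQ bQ assms(3)]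
    obtain d' F' G' E' where "rep d' F' G' E' (fsize \<phi> * xc Q) (fapply \<phi> Q)"
      unfolding gef_def by blast
    then obtain F'' G'' where "rep d' F'' G'' {} (fsize \<phi> * xc Q) (fapply \<phi> Q)"
      using elim_eqs assms(3) by blast
    then have "has_ext_formulation (fapply \<phi> Q) (fsize \<phi> * xc Q)" by (rule rep_imp_hef)
    then show ?thesis unfolding xc_def by (rule Least_le)
  qed
qed

end
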